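(* Let $R$ be a commutative ring with identity that is not an integral domain. If $R$ is not isomorphic to $\mathbb{Z}_2 \times D$ for any integral domain $D$, then $\gamma_t(\Gamma(R)) = \gamma(\Gamma(R))$ (as cardinal numbers).
   Context: All rings are commutative with identity $1$. $Z(R)$ denotes the set of zero-divisors of $R$ and $Z(R)^* = Z(R)\setminus\{0\}$. The zero-divisor graph $\Gamma(R)$ has vertex set $Z(R)^*$; distinct vertices $r,s$ are adjacent iff $rs=0$, and a vertex $x$ is additionally considered adjacent to itself (looped) iff $x^2=0$. A set $X\subseteq Z(R)^*$ is a dominating set if every vertex not in $X$ is adjacent to some element of $X$; it is a total dominating set if every vertex $v$ (including those in $X$) is adjacent to some $x\in X$, where self-adjacency $x=v$ with $x^2=0$ counts. $\gamma(\Gamma(R))$ and $\gamma_t(\Gamma(R))$ are the minimum cardinalities of a dominating set and of a total dominating set, respectively. *)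

theory Defs
  imports "HOL-Algebra.Algebra" "HOL-Number_Theory.Residues" "HOL-Library.Equipollence"
begin

definition zero_divisors :: "('a, 'b) ring_scheme \<Rightarrow> 'a set" where
  "zero_divisors R = {x \<in> carrier R. \<exists>y \<in> carrier R. y \<noteq> \<zero>\<^bsub>R\<^esub> \<and> x \<otimes>\<^bsub>R\<^esub> y = \<zero>\<^bsub>R\<^esub>}"

definition zd_star :: "('a, 'b) ring_scheme \<Rightarrow> 'a set" where
  "zd_star R = zero_divisors R - {\<zero>\<^bsub>R\<^esub>}"

text \<open>Adjacency in Gamma(R): distinct vertices r, s are adjacent iff rs = 0;
  a vertex x is looped iff x^2 = 0.  Both are captured by x y = 0.\<close>
definition zdg_adj :: "('a, 'b) ring_scheme \<Rightarrow> 'a \<Rightarrow> 'a \<Rightarrow> bool" where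
  "zdg_adj R x y \<longleftrightarrow> x \<in> zd_star R \<and> y \<in> zd_star R \<and> x \<otimes>\<^bsub>R\<^esub> y = \<zero>\<^bsub>R\<^esub>"

definition dominating_set :: "('a, 'b) ring_scheme \<Rightarrow> 'a set \<Rightarrow> bool" where
  "dominating_set R S \<longleftrightarrow> S \<subseteq> zd_star R \<and>
     (\<forall>w \<in> zd_star R - S. \<exists>x \<in> S. zdg_adj R x w)"

definition total_dominating_set :: "('a, 'b) ring_scheme \<Rightarrow> 'a set \<Rightarrow> bool" where
  "total_dominating_set R S \<longleftrightarrow> S \<subseteq> zd_star R \<and>
     (\<forall>w \<in> zd_star R. \<exists>x \<in> S. zdg_adj R x w)"

definition min_dominating_set :: "('a, 'b) ring_scheme \<Rightarrow> 'a set \<Rightarrow> bool" where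
  "min_dominating_set R S \<longleftrightarrow> dominating_set R S \<and>
     (\<forall>Y. dominating_set R Y \<longrightarrow> S \<lesssim> Y)"

definition min_total_dominating_set :: "('a, 'b) ring_scheme \<Rightarrow> 'a set \<Rightarrow> bool" where
  "min_total_dominating_set R S \<longleftrightarrow> total_dominating_set R S \<and>
     (\<forall>Y. total_dominating_set R Y \<longrightarrow> S \<lesssim> Y)"

end

theory Submission
  imports Defs
begin

definition zdom :: "('a, 'b) ring_scheme \<Rightarrow> 'a \<Rightarrow> 'a ring" where
  "zdom R x = \<lparr>carrier = {r \<in> carrier R. r \<otimes>\<^bsub>R\<^esub> x = \<zero>\<^bsub>R\<^esub>}, monoid.mult = (\<otimes>\<^bsub>R\<^esub>), one = \<one>\<^bsub>R\<^esub> \<ominus>\<^bsub>R\<^esub> x, ring.zero = \<zero>\<^bsub>R\<^esub>, ring.add = (\<oplus>\<^bsub>R\<^esub>)\<rparr>"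

lemma zdom_simps: "carrier (zdom R x) = {r \<in> carrier R. r \<otimes>\<^bsub>R\<^esub> x = \<zero>\<^bsub>R\<^esub>}"
  "(\<otimes>\<^bsub>zdom R x\<^esub>) = (\<otimes>\<^bsub>R\<^esub>)" "\<one>\<^bsub>zdom R x\<^esub> = \<one>\<^bsub>R\<^esub> \<ominus>\<^bsub>R\<^esub> x"
  "\<zero>\<^bsub>zdom R x\<^esub> = \<zero>\<^bsub>R\<^esub>" "(\<oplus>\<^bsub>zdom R x\<^esub>) = (\<oplus>\<^bsub>R\<^esub>)"
  by (simp_all add: zdom_def)

lemma RDP_simps:
  "carrier (RDirProd (residue_ring 2) D) = {0..1} \<times> carrier D"
  "(a, b) \<otimes>\<^bsub>RDirProd (residue_ring 2) D\<^esub> (c, d) = ((a * c) mod 2, b \<otimes>\<^bsub>D\<^esub> d)"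
  "(a, b) \<oplus>\<^bsub>RDirProd (residue_ring 2) D\<^esub> (c, d) = ((a + c) mod 2, b \<oplus>\<^bsub>D\<^esub> d)"
  "\<one>\<^bsub>RDirProd (residue_ring 2) D\<^esub> = (1, \<one>\<^bsub>D\<^esub>)"
  by (simp_all add: RDirProd_carrier RDirProd_def DirProd_def monoid.defs residue_ring_def)

definition isol :: "('a, 'b) ring_scheme \<Rightarrow> 'a set \<Rightarrow> 'a set" where
  "isol R S = {x \<in> S. \<forall>s\<in>S. s \<otimes>\<^bsub>R\<^esub> x \<noteq> \<zero>\<^bsub>R\<^esub>}"

context cring begin

lemma zd_star_iff: "y \<in> zd_star R \<longleftrightarrow> y \<in> carrier R \<and> y \<noteq> \<zero> \<and> (\<exists>z\<in>carrier R. z \<noteq> \<zero> \<and> y \<otimes> z = \<zero>)"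
  by (auto simp: zd_star_def zero_divisors_def)

lemma zd_starI: "y \<in> carrier R \<Longrightarrow> y \<noteq> \<zero> \<Longrightarrow> z \<in> carrier R \<Longrightarrow> z \<noteq> \<zero> \<Longrightarrow> y \<otimes> z = \<zero> \<Longrightarrow> y \<in> zd_star R"
  by (auto simp: zd_star_iff)

lemma dom_iff: "dominating_set R S \<longleftrightarrow> S \<subseteq> zd_star R \<and> (\<forall>w\<in>zd_star R - S. \<exists>x\<in>S. x \<otimes> w = \<zero>)"
  unfolding dominating_set_def zdg_adj_def by blast

lemma tot_iff: "total_dominating_set R S \<longleftrightarrow> S \<subseteq> zd_star R \<and> (\<forall>w\<in>zd_star R. \<exists>x\<in>S. x \<otimes> w = \<zero>)"
  unfolding total_dominating_set_def zdg_adj_def by blast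

lemma tot_dom: "total_dominating_set R S \<Longrightarrow> dominating_set R S"
  by (auto simp: tot_iff dom_iff)

lemma zd_star_tot: "total_dominating_set R (zd_star R)"
  unfolding tot_iff
proof safe
  fix w assume w: "w \<in> zd_star R"
  then obtain z where z: "z \<in> carrier R" "z \<noteq> \<zero>" "w \<otimes> z = \<zero>" by (auto simp: zd_star_iff)
  have "z \<otimes> w = \<zero>" using z w by (simp add: m_comm zd_star_iff)
  moreover have "z \<in> zd_star R" using z w \<open>z \<otimes> w = \<zero>\<close> by (intro zd_starI[of z w]) (auto simp: zd_star_iff)
  ultimately show "\<exists>x\<in>zd_star R. x \<otimes> w = \<zero>" by blast
qed

lemma isol_empty_tot: "dominating_set R S \<Longrightarrow> isol R S = {} \<Longrightarrow> total_dominating_set R S"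
  unfolding dom_iff tot_iff isol_def by blast

lemma replace:
  assumes dom: "dominating_set R S" and fin: "finite S" and u: "u \<in> S"
    and y: "y \<in> zd_star R" "y \<notin> S"
    and udom: "\<exists>s \<in> insert y (S - {u}). s \<otimes> u = \<zero>"
    and wdom: "\<And>w. w \<in> zd_star R \<Longrightarrow> w \<notin> S \<Longrightarrow> u \<otimes> w = \<zero> \<Longrightarrow> \<exists>s \<in> insert y (S - {u}). s \<otimes> w = \<zero>"
  shows "dominating_set R (insert y (S - {u})) \<and> finite (insert y (S - {u})) \<and> card (insert y (S - {u})) \<le> card S"
proof (intro conjI)
  show "dominating_set R (insert y (S - {u}))"
    unfolding dom_iff
  proof (intro conjI ballI)
    show "insert y (S - {u}) \<subseteq> zd_star R" using dom y by (auto simp: dom_iff)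
    fix w assume w: "w \<in> zd_star R - insert y (S - {u})"
    show "\<exists>x\<in>insert y (S - {u}). x \<otimes> w = \<zero>"
    proof (cases "w = u")
      case True then show ?thesis using udom by simp
    next
      case False
      then have "w \<notin> S" using w by auto
      then obtain s where s: "s \<in> S" "s \<otimes> w = \<zero>" using dom w by (auto simp: dom_iff)
      show ?thesis
      proof (cases "s = u")
        case True then show ?thesis using wdom[of w] w s \<open>w \<notin> S\<close> by auto
      next
        case False then show ?thesis using s by auto
      qed
    qed
  qed
  show "finite (insert y (S - {u}))" using fin by simp
  show "card (insert y (S - {u})) \<le> card S"
    using fin u y by (simp add: card_Diff_singleton) (metis Suc_pred card_gt_0_iff empty_iff le_refl)
qed

lemma zdom_domain:
  assumes xc: "x \<in> carrier R" and xx: "x \<otimes> x = x"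
    and e0: "\<one> \<ominus> x \<noteq> \<zero>"
    and dm: "\<forall>c\<in>carrier R. \<forall>d\<in>carrier R. c \<otimes> x = \<zero> \<longrightarrow> d \<otimes> x = \<zero> \<longrightarrow> c \<noteq> \<zero> \<longrightarrow> d \<noteq> \<zero> \<longrightarrow> c \<otimes> d \<noteq> \<zero>"
  shows "domain (zdom R x)"
proof -
  define e where "e = \<one> \<ominus> x"
  have ec: "e \<in> carrier R" using xc by (simp add: e_def)
  have ex: "e \<otimes> x = \<zero>" using xc xx unfolding e_def by algebra
  have ex1: "e \<oplus> x = \<one>" using xc unfolding e_def by algebra
  have split: "\<And>r. r \<in> carrier R \<Longrightarrow> r \<otimes> e \<oplus> r \<otimes> x = r"
  proof -
    fix r assume r: "r \<in> carrier R"
    have "r \<otimes> e \<oplus> r \<otimes> x = r \<otimes> (e \<oplus> x)" using r ec xc by (simp add: r_distr)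
    also have "\<dots> = r" using ex1 r by simp
    finally show "r \<otimes> e \<oplus> r \<otimes> x = r" .
  qed
  have eD: "\<And>r. r \<in> carrier R \<Longrightarrow> r \<otimes> x = \<zero> \<Longrightarrow> r \<otimes> e = r"
  proof -
    fix r assume r: "r \<in> carrier R" and rx: "r \<otimes> x = \<zero>"
    have "r \<otimes> e = r \<otimes> e \<oplus> r \<otimes> x" using rx r ec by simp
    also have "\<dots> = r" using split r by simp
    finally show "r \<otimes> e = r" .
  qed
  let ?C = "{r \<in> carrier R. r \<otimes> x = \<zero>}"
  have "abelian_group (zdom R x)"
  proof (rule abelian_groupI, unfold zdom_simps)
    fix a b assume "a \<in> ?C" "b \<in> ?C"
    then show "a \<oplus> b \<in> ?C" using xc by (simp add: l_distr)
  next
    show "\<zero> \<in> ?C" using xc by simp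
  next
    fix a b c assume "a \<in> ?C" "b \<in> ?C" "c \<in> ?C"
    then show "a \<oplus> b \<oplus> c = a \<oplus> (b \<oplus> c)" by (simp add: a_assoc)
  next
    fix a b assume "a \<in> ?C" "b \<in> ?C"
    then show "a \<oplus> b = b \<oplus> a" by (simp add: a_comm)
  next
    fix a assume "a \<in> ?C"
    then show "\<zero> \<oplus> a = a" by simp
  next
    fix a assume a: "a \<in> ?C"
    then have "\<ominus> a \<in> ?C" "\<ominus> a \<oplus> a = \<zero>" using xc
      by (auto simp: l_minus l_neg)
    then show "\<exists>y\<in>?C. y \<oplus> a = \<zero>" by blast
  qed
  moreover have "comm_monoid (zdom R x)"
  proof (rule comm_monoidI, unfold zdom_simps e_def[symmetric])
    fix a b assume "a \<in> ?C" "b \<in> ?C"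
    then show "a \<otimes> b \<in> ?C" using xc by (simp add: m_assoc)
  next
    show "e \<in> ?C" using ec ex by simp
  next
    fix a b c assume "a \<in> ?C" "b \<in> ?C" "c \<in> ?C"
    then show "a \<otimes> b \<otimes> c = a \<otimes> (b \<otimes> c)" by (simp add: m_assoc)
  next
    fix a assume "a \<in> ?C"
    then show "e \<otimes> a = a" using eD ec by (simp add: m_comm)
  next
    fix a b assume "a \<in> ?C" "b \<in> ?C"
    then show "a \<otimes> b = b \<otimes> a" by (simp add: m_comm)
  qed
  moreover have "cring (zdom R x)"
    by (rule cringI[OF calculation]) (auto simp: zdom_simps l_distr)
  ultimately show "domain (zdom R x)"
  proof (intro domain.intro domain_axioms.intro, unfold zdom_simps e_def[symmetric])
    show "e \<noteq> \<zero>" using e0 by (simp add: e_def)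
  next
    fix a b assume "a \<otimes> b = \<zero>" "a \<in> ?C" "b \<in> ?C"
    then show "a = \<zero> \<or> b = \<zero>" using dm by blast
  qed
qed

lemma zdom_iso:
  assumes xc: "x \<in> carrier R" and xx: "x \<otimes> x = x" and x0: "x \<noteq> \<zero>"
    and fR: "\<forall>v\<in>carrier R. v \<otimes> (\<one> \<ominus> x) = \<zero> \<longrightarrow> v = \<zero> \<or> v = x"
  shows "R \<simeq> RDirProd (residue_ring 2) (zdom R x)"
proof -
  define e where "e = \<one> \<ominus> x"
  have ec: "e \<in> carrier R" using xc by (simp add: e_def)
  have ex: "e \<otimes> x = \<zero>" using xc xx unfolding e_def by algebra
  have xe: "x \<otimes> e = \<zero>" using xc xx unfolding e_def by algebra
  have ee: "e \<otimes> e = e" using xc xx unfolding e_def by algebra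
  have ex1: "e \<oplus> x = \<one>" using xc unfolding e_def by algebra
  have split: "\<And>r. r \<in> carrier R \<Longrightarrow> r \<otimes> e \<oplus> r \<otimes> x = r"
  proof -
    fix r assume r: "r \<in> carrier R"
    have "r \<otimes> e \<oplus> r \<otimes> x = r \<otimes> (e \<oplus> x)" using r ec xc by (simp add: r_distr)
    also have "\<dots> = r" using ex1 r by simp
    finally show "r \<otimes> e \<oplus> r \<otimes> x = r" .
  qed
  have eD: "\<And>r. r \<in> carrier R \<Longrightarrow> r \<otimes> x = \<zero> \<Longrightarrow> r \<otimes> e = r"
  proof -
    fix r assume r: "r \<in> carrier R" and rx: "r \<otimes> x = \<zero>"
    have "r \<otimes> e = r \<otimes> e \<oplus> r \<otimes> x" using rx r ec by simp
    also have "\<dots> = r" using split r by simp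
    finally show "r \<otimes> e = r" .
  qed
  have rx: "\<And>r. r \<in> carrier R \<Longrightarrow> r \<otimes> x = \<zero> \<or> r \<otimes> x = x"
  proof -
    fix r assume r: "r \<in> carrier R"
    have "(r \<otimes> x) \<otimes> (\<one> \<ominus> x) = \<zero>" using r xc xx by algebra
    then show "r \<otimes> x = \<zero> \<or> r \<otimes> x = x" using fR r xc by blast
  qed
  have xpx: "x \<oplus> x = \<zero>"
  proof -
    have "(x \<oplus> x) \<otimes> (\<one> \<ominus> x) = \<zero>" using xc xx by algebra
    then have "x \<oplus> x = \<zero> \<or> x \<oplus> x = x" using fR xc by blast
    moreover have "x \<oplus> x \<noteq> x"
    proof
      assume H: "x \<oplus> x = x"
      have "x = (x \<oplus> x) \<ominus> x" using xc by algebra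
      also have "\<dots> = x \<ominus> x" using H by simp
      also have "\<dots> = \<zero>" using xc by algebra
      finally have "x = \<zero>" .
      then show False using x0 by simp
    qed
    ultimately show ?thesis by blast
  qed
  let ?C = "{r \<in> carrier R. r \<otimes> x = \<zero>}"
  let ?P = "RDirProd (residue_ring 2) (zdom R x)"
  define h where "h = (\<lambda>r. (if r \<otimes> x = \<zero> then 0 else 1 :: int, r \<otimes> e))"
  have PC: "carrier ?P = {0..1} \<times> ?C" by (simp add: RDP_simps zdom_simps)
  have hc: "\<And>r. r \<in> carrier R \<Longrightarrow> h r \<in> {0..1} \<times> ?C"
  proof -
    fix r assume r: "r \<in> carrier R"
    have "r \<otimes> e \<otimes> x = \<zero>" using r ec xc ex by (simp add: m_assoc)
    then show "h r \<in> {0..1} \<times> ?C" using r ec by (simp add: h_def)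
  qed
  have hom: "h \<in> ring_hom R ?P"
  proof (rule ring_hom_memI)
    fix r assume "r \<in> carrier R" then show "h r \<in> carrier ?P" using hc PC by simp
  next
    fix r s assume r: "r \<in> carrier R" and s: "s \<in> carrier R"
    have "(r \<otimes> e) \<otimes> (s \<otimes> e) = (r \<otimes> s) \<otimes> (e \<otimes> e)" using r s ec by algebra
    then have m2: "(r \<otimes> s) \<otimes> e = (r \<otimes> e) \<otimes> (s \<otimes> e)" using ee by simp
    have "(r \<otimes> x) \<otimes> (s \<otimes> x) = (r \<otimes> s) \<otimes> (x \<otimes> x)" using r s xc by algebra
    then have m1: "(r \<otimes> s) \<otimes> x = (r \<otimes> x) \<otimes> (s \<otimes> x)" using xx by simp
    have fst: "(if r \<otimes> s \<otimes> x = \<zero> then 0 else 1 :: int) = ((if r \<otimes> x = \<zero> then 0 else 1) * (if s \<otimes> x = \<zero> then 0 else 1)) mod 2"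
      using rx[OF r] rx[OF s] m1 x0 xx xc by auto
    show "h (r \<otimes> s) = h r \<otimes>\<^bsub>?P\<^esub> h s"
      unfolding h_def RDP_simps zdom_simps using fst m2 by simp
    have a2: "(r \<oplus> s) \<otimes> e = r \<otimes> e \<oplus> s \<otimes> e" using r s ec by (simp add: l_distr)
    have a1: "(r \<oplus> s) \<otimes> x = r \<otimes> x \<oplus> s \<otimes> x" using r s xc by (simp add: l_distr)
    have fst2: "(if (r \<oplus> s) \<otimes> x = \<zero> then 0 else 1 :: int) = ((if r \<otimes> x = \<zero> then 0 else 1) + (if s \<otimes> x = \<zero> then 0 else 1)) mod 2"
      using rx[OF r] rx[OF s] a1 x0 xpx xc by auto
    show "h (r \<oplus> s) = h r \<oplus>\<^bsub>?P\<^esub> h s"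
      unfolding h_def RDP_simps zdom_simps using fst2 a2 by simp
  next
    show "h \<one> = \<one>\<^bsub>?P\<^esub>" unfolding h_def RDP_simps zdom_simps e_def[symmetric] using xc ec x0 by simp
  qed
  define g where "g = (\<lambda>(b::int, d). d \<oplus> (if b = 1 then x else \<zero>))"
  have "bij_betw h (carrier R) ({0..1} \<times> ?C)"
  proof (rule bij_betw_byWitness[where f'=g])
    show "\<forall>a\<in>carrier R. g (h a) = a"
    proof
      fix r assume r: "r \<in> carrier R"
      show "g (h r) = r"
      proof (cases "r \<otimes> x = \<zero>")
        case True
        then show ?thesis using r ec eD by (simp add: g_def h_def)
      next
        case False
        then have "r \<otimes> x = x" using rx[OF r] by blast
        then show ?thesis using False split[OF r] by (simp add: g_def h_def)
      qed
    qed
    show "\<forall>a'\<in>{0..1} \<times> ?C. h (g a') = a'"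
    proof
      fix p assume p: "p \<in> {0..1::int} \<times> ?C"
      then obtain b d where bd: "p = (b, d)" "b = 0 \<or> b = 1" "d \<in> carrier R" "d \<otimes> x = \<zero>"
      proof (cases p)
        case (Pair b d)
        then have "b \<in> {0..1::int}" "d \<in> ?C" using p by auto
        then have "b = 0 \<or> b = 1" by auto
        then show ?thesis using that Pair \<open>d \<in> ?C\<close> by blast
      qed
      have de: "d \<otimes> e = d" using eD bd by simp
      have A: "(d \<oplus> x) \<otimes> x = x" using bd xc xx by (simp add: l_distr)
      have B: "(d \<oplus> x) \<otimes> e = d" using bd xc ec xe de by (simp add: l_distr)
      show "h (g p) = p"
      proof (cases "b = 1")
        case True then show ?thesis using bd A B x0 by (simp add: g_def h_def)
      next
        case False then show ?thesis using bd de by (simp add: g_def h_def)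
      qed
    qed
    show "h ` carrier R \<subseteq> {0..1} \<times> ?C" using hc by (simp add: image_subset_iff)
    show "g ` ({0..1} \<times> ?C) \<subseteq> carrier R" using xc by (auto simp: g_def)
  qed
  then have "h \<in> ring_iso R ?P" using hom PC by (simp add: ring_iso_def)
  then show "R \<simeq> ?P" by (auto simp: is_ring_iso_def)
qed

lemma step:
  assumes noiso: "\<not> (\<exists>D::'a ring. domain D \<and> R \<simeq> RDirProd (residue_ring 2) D)"
    and dom: "dominating_set R S" and fin: "finite S" and xi: "x \<in> isol R S"
    and nomove: "\<not> (\<exists>S'. dominating_set R S' \<and> finite S' \<and> card S' \<le> card S \<and> isol R S' \<subset> isol R S)"
  shows "\<exists>T. total_dominating_set R T \<and> finite T \<and> card T \<le> card S"
proof -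
  have xS: "x \<in> S" and iso: "\<And>s. s \<in> S \<Longrightarrow> s \<otimes> x \<noteq> \<zero>" using xi by (auto simp: isol_def)
  have SZ: "S \<subseteq> zd_star R" and domw: "\<And>w. w \<in> zd_star R \<Longrightarrow> w \<notin> S \<Longrightarrow> \<exists>s\<in>S. s \<otimes> w = \<zero>"
    using dom by (auto simp: dom_iff)
  have Sc: "\<And>s. s \<in> S \<Longrightarrow> s \<in> carrier R" using SZ by (auto simp: zd_star_iff)
  have xc: "x \<in> carrier R" using Sc xS by blast
  have x0: "x \<noteq> \<zero>" using SZ xS by (auto simp: zd_star_iff)
  have xZ: "x \<in> zd_star R" using SZ xS by blast
  obtain y0 where y0: "y0 \<in> carrier R" "y0 \<noteq> \<zero>" "x \<otimes> y0 = \<zero>" using xZ unfolding zd_star_iff by blast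
  have y0x: "y0 \<otimes> x = \<zero>" using y0 xc by (simp add: m_comm)
  have iso': "\<And>s. s \<in> S \<Longrightarrow> x \<otimes> s \<noteq> \<zero>" using iso Sc xc by (simp add: m_comm)
  have Zc: "\<And>w. w \<in> zd_star R \<Longrightarrow> w \<in> carrier R" by (simp add: zd_star_iff)
  have moveD: "\<And>S'. dominating_set R S' \<and> finite S' \<and> card S' \<le> card S \<Longrightarrow> isol R S' \<subseteq> isol R S - {x} \<Longrightarrow> False"
    using nomove xi by blast
  have M1: "\<And>z. z \<in> carrier R \<Longrightarrow> z \<otimes> x = \<zero> \<Longrightarrow> (\<And>a. a \<in> carrier R \<Longrightarrow> a \<otimes> x = \<zero> \<Longrightarrow> z \<otimes> a = \<zero>) \<Longrightarrow> z = \<zero>"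
  proof (rule ccontr)
    fix z assume zc: "z \<in> carrier R" and zx: "z \<otimes> x = \<zero>" and za: "\<And>a. a \<in> carrier R \<Longrightarrow> a \<otimes> x = \<zero> \<Longrightarrow> z \<otimes> a = \<zero>"
      and z0: "z \<noteq> \<zero>"
    have zZ: "z \<in> zd_star R" using zd_starI[OF zc z0 xc x0 zx] .
    have zS: "z \<notin> S" using iso zx by blast
    have zz: "z \<otimes> z = \<zero>" using za[OF zc zx] .
    have A: "dominating_set R (insert z (S - {x})) \<and> finite (insert z (S - {x})) \<and> card (insert z (S - {x})) \<le> card S"
    proof (rule replace[OF dom fin xS zZ zS])
      show "\<exists>s\<in>insert z (S - {x}). s \<otimes> x = \<zero>" using zx by blast
      fix w assume w: "w \<in> zd_star R" "w \<notin> S" "x \<otimes> w = \<zero>"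
      then have "w \<otimes> x = \<zero>" using Zc[OF w(1)] xc by (simp add: m_comm)
      then have "z \<otimes> w = \<zero>" using za Zc[OF w(1)] by blast
      then show "\<exists>s\<in>insert z (S - {x}). s \<otimes> w = \<zero>" by blast
    qed
    have B: "isol R (insert z (S - {x})) \<subseteq> isol R S - {x}"
    proof
      fix u assume u: "u \<in> isol R (insert z (S - {x}))"
      then have uS': "u \<in> insert z (S - {x})" and un: "\<forall>s\<in>insert z (S - {x}). s \<otimes> u \<noteq> \<zero>"
        by (auto simp: isol_def)
      have "u \<noteq> z" using un zz by blast
      then have uS: "u \<in> S" "u \<noteq> x" using uS' by auto
      have "\<forall>s\<in>S. s \<otimes> u \<noteq> \<zero>"
      proof
        fix s assume "s \<in> S"
        show "s \<otimes> u \<noteq> \<zero>"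
        proof (cases "s = x")
          case True then show ?thesis using iso' uS by simp
        next
          case False then show ?thesis using un \<open>s \<in> S\<close> by blast
        qed
      qed
      then show "u \<in> isol R S - {x}" using uS by (auto simp: isol_def)
    qed
    show False using moveD[OF A B] .
  qed
  have M2: "\<And>s0. s0 \<in> S \<Longrightarrow> s0 \<noteq> x \<Longrightarrow> (\<And>a. a \<in> carrier R \<Longrightarrow> a \<otimes> x = \<zero> \<Longrightarrow> a \<otimes> s0 = \<zero>) \<Longrightarrow> False"
  proof -
    fix s0 assume s0: "s0 \<in> S" "s0 \<noteq> x" and sa: "\<And>a. a \<in> carrier R \<Longrightarrow> a \<otimes> x = \<zero> \<Longrightarrow> a \<otimes> s0 = \<zero>"
    have yZ: "y0 \<in> zd_star R" using zd_starI[OF y0(1,2) xc x0 y0x] .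
    have yS: "y0 \<notin> S" using iso y0x by blast
    have ys0: "s0 \<otimes> y0 = \<zero>" using sa[OF y0(1) y0x] Sc[OF s0(1)] y0(1) by (simp add: m_comm)
    have A: "dominating_set R (insert y0 (S - {x})) \<and> finite (insert y0 (S - {x})) \<and> card (insert y0 (S - {x})) \<le> card S"
    proof (rule replace[OF dom fin xS yZ yS])
      show "\<exists>s\<in>insert y0 (S - {x}). s \<otimes> x = \<zero>" using y0x by blast
      fix w assume w: "w \<in> zd_star R" "w \<notin> S" "x \<otimes> w = \<zero>"
      then have "w \<otimes> x = \<zero>" using Zc[OF w(1)] xc by (simp add: m_comm)
      then have "w \<otimes> s0 = \<zero>" using sa Zc[OF w(1)] by blast
      then have "s0 \<otimes> w = \<zero>" using Zc[OF w(1)] Sc[OF s0(1)] by (simp add: m_comm)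
      then show "\<exists>s\<in>insert y0 (S - {x}). s \<otimes> w = \<zero>" using s0 by blast
    qed
    have B: "isol R (insert y0 (S - {x})) \<subseteq> isol R S - {x}"
    proof
      fix u assume u: "u \<in> isol R (insert y0 (S - {x}))"
      then have uS': "u \<in> insert y0 (S - {x})" and un: "\<forall>s\<in>insert y0 (S - {x}). s \<otimes> u \<noteq> \<zero>"
        by (auto simp: isol_def)
      have "u \<noteq> y0" using un ys0 s0 by blast
      then have uS: "u \<in> S" "u \<noteq> x" using uS' by auto
      have "\<forall>s\<in>S. s \<otimes> u \<noteq> \<zero>"
      proof
        fix s assume "s \<in> S"
        show "s \<otimes> u \<noteq> \<zero>"
        proof (cases "s = x")
          case True then show ?thesis using iso' uS by simp
        next
          case False then show ?thesis using un \<open>s \<in> S\<close> by blast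
        qed
      qed
      then show "u \<in> isol R S - {x}" using uS by (auto simp: isol_def)
    qed
    show False using moveD[OF A B] .
  qed
  have M3: "\<And>s0. s0 \<in> S \<Longrightarrow> s0 \<noteq> x \<Longrightarrow> (\<And>a. a \<in> carrier R \<Longrightarrow> a \<otimes> s0 = \<zero> \<Longrightarrow> a \<otimes> x = \<zero>) \<Longrightarrow> False"
  proof -
    fix s0 assume s0: "s0 \<in> S" "s0 \<noteq> x" and sa: "\<And>a. a \<in> carrier R \<Longrightarrow> a \<otimes> s0 = \<zero> \<Longrightarrow> a \<otimes> x = \<zero>"
    have s0c: "s0 \<in> carrier R" using Sc s0 by blast
    have s0Z: "s0 \<in> zd_star R" using SZ s0 by blast
    obtain y where y: "y \<in> carrier R" "y \<noteq> \<zero>" "s0 \<otimes> y = \<zero>" using s0Z unfolding zd_star_iff by blast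
    have ys: "y \<otimes> s0 = \<zero>" using y s0c by (simp add: m_comm)
    have yx: "y \<otimes> x = \<zero>" using sa[OF y(1) ys] .
    have xy: "x \<otimes> y = \<zero>" using yx y xc by (simp add: m_comm)
    have yZ: "y \<in> zd_star R" using zd_starI[OF y(1,2) xc x0 yx] .
    have yS: "y \<notin> S" using iso yx by blast
    have A: "dominating_set R (insert y (S - {s0})) \<and> finite (insert y (S - {s0})) \<and> card (insert y (S - {s0})) \<le> card S"
    proof (rule replace[OF dom fin s0(1) yZ yS])
      show "\<exists>s\<in>insert y (S - {s0}). s \<otimes> s0 = \<zero>" using ys by blast
      fix w assume w: "w \<in> zd_star R" "w \<notin> S" "s0 \<otimes> w = \<zero>"
      then have "w \<otimes> s0 = \<zero>" using Zc[OF w(1)] s0c by (simp add: m_comm)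
      then have "w \<otimes> x = \<zero>" using sa Zc[OF w(1)] by blast
      then have "x \<otimes> w = \<zero>" using Zc[OF w(1)] xc by (simp add: m_comm)
      then show "\<exists>s\<in>insert y (S - {s0}). s \<otimes> w = \<zero>" using s0 xS by blast
    qed
    have B: "isol R (insert y (S - {s0})) \<subseteq> isol R S - {x}"
    proof
      fix u assume u: "u \<in> isol R (insert y (S - {s0}))"
      then have uS': "u \<in> insert y (S - {s0})" and un: "\<forall>s\<in>insert y (S - {s0}). s \<otimes> u \<noteq> \<zero>"
        by (auto simp: isol_def)
      have "u \<noteq> y" using un xy s0 xS by blast
      moreover have "u \<noteq> x" using un yx by blast
      ultimately have uS: "u \<in> S" "u \<noteq> x" "u \<noteq> s0" using uS' by auto
      have uc: "u \<in> carrier R" using Sc uS by blast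
      have "\<forall>s\<in>S. s \<otimes> u \<noteq> \<zero>"
      proof
        fix s assume "s \<in> S"
        show "s \<otimes> u \<noteq> \<zero>"
        proof (cases "s = s0")
          case True
          show ?thesis
          proof
            assume "s \<otimes> u = \<zero>"
            then have "u \<otimes> s0 = \<zero>" using True uc s0c by (simp add: m_comm)
            then have "u \<otimes> x = \<zero>" using sa uc by blast
            then have "x \<otimes> u = \<zero>" using uc xc by (simp add: m_comm)
            then show False using un xS s0 by blast
          qed
        next
          case False then show ?thesis using un \<open>s \<in> S\<close> by blast
        qed
      qed
      then show "u \<in> isol R S - {x}" using uS by (auto simp: isol_def)
    qed
    show False using moveD[OF A B] .
  qed
  have xx: "x \<otimes> x = x"
  proof (rule ccontr)
    assume qx: "x \<otimes> x \<noteq> x"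
    have qc: "x \<otimes> x \<in> carrier R" using xc by simp
    have q0: "x \<otimes> x \<noteq> \<zero>" using iso xS by blast
    have "x \<otimes> x \<otimes> y0 = x \<otimes> (x \<otimes> y0)" using xc y0 by (simp add: m_assoc)
    then have qy: "x \<otimes> x \<otimes> y0 = \<zero>" using y0 xc by simp
    have qZ: "x \<otimes> x \<in> zd_star R" using zd_starI[OF qc q0 y0(1,2) qy] .
    show False
    proof (cases "x \<otimes> x \<in> S")
      case True
      show False
      proof (rule M2[OF True qx])
        fix a assume a: "a \<in> carrier R" "a \<otimes> x = \<zero>"
        have "a \<otimes> (x \<otimes> x) = (a \<otimes> x) \<otimes> x" using a(1) xc by algebra
        also have "\<dots> = \<zero>" using a xc by simp
        finally show "a \<otimes> (x \<otimes> x) = \<zero>" .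
      qed
    next
      case False
      then obtain s where s: "s \<in> S" "s \<otimes> (x \<otimes> x) = \<zero>" using domw qZ by blast
      have sc: "s \<in> carrier R" using Sc s by blast
      have "s \<otimes> x = \<zero>"
      proof (rule M1)
        show "s \<otimes> x \<in> carrier R" using sc xc by simp
        show "s \<otimes> x \<otimes> x = \<zero>" using s sc xc by (simp add: m_assoc)
        fix a assume a: "a \<in> carrier R" "a \<otimes> x = \<zero>"
        have "s \<otimes> x \<otimes> a = s \<otimes> (a \<otimes> x)" using a(1) sc xc by algebra
        then show "s \<otimes> x \<otimes> a = \<zero>" using a sc by simp
      qed
      then show False using iso s by blast
    qed
  qed
  define e where "e = \<one> \<ominus> x"
  have ec: "e \<in> carrier R" using xc by (simp add: e_def)
  have ex: "e \<otimes> x = \<zero>" using xc xx unfolding e_def by algebra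
  have xe: "x \<otimes> e = \<zero>" using xc xx unfolding e_def by algebra
  have ee: "e \<otimes> e = e" using xc xx unfolding e_def by algebra
  have ex1: "e \<oplus> x = \<one>" using xc unfolding e_def by algebra
  have split: "\<And>r. r \<in> carrier R \<Longrightarrow> r \<otimes> e \<oplus> r \<otimes> x = r"
  proof -
    fix r assume r: "r \<in> carrier R"
    have "r \<otimes> e \<oplus> r \<otimes> x = r \<otimes> (e \<oplus> x)" using r ec xc by (simp add: r_distr)
    also have "\<dots> = r" using ex1 r by simp
    finally show "r \<otimes> e \<oplus> r \<otimes> x = r" .
  qed
  have eD: "\<And>r. r \<in> carrier R \<Longrightarrow> r \<otimes> x = \<zero> \<Longrightarrow> r \<otimes> e = r"
  proof -
    fix r assume r: "r \<in> carrier R" and rx: "r \<otimes> x = \<zero>"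
    have "r \<otimes> e = r \<otimes> e \<oplus> r \<otimes> x" using rx r ec by simp
    also have "\<dots> = r" using split r by simp
    finally show "r \<otimes> e = r" .
  qed
  have fB: "\<And>r. r \<in> carrier R \<Longrightarrow> r \<otimes> e = \<zero> \<Longrightarrow> r \<otimes> x = r"
  proof -
    fix r assume r: "r \<in> carrier R" and re: "r \<otimes> e = \<zero>"
    have "r \<otimes> x = r \<otimes> e \<oplus> r \<otimes> x" using re r xc by simp
    also have "\<dots> = r" using split r by simp
    finally show "r \<otimes> x = r" .
  qed
  have e0: "e \<noteq> \<zero>"
  proof
    assume "e = \<zero>"
    then have "y0 \<otimes> e = \<zero>" using y0 by simp
    then have "y0 \<otimes> x = y0" using fB y0 by blast
    then show False using y0x y0 by simp
  qed
  have D3: "\<And>s. s \<in> S \<Longrightarrow> s \<noteq> x \<Longrightarrow> s \<otimes> e \<noteq> \<zero>"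
  proof
    fix s assume s: "s \<in> S" "s \<noteq> x" "s \<otimes> e = \<zero>"
    have sc: "s \<in> carrier R" using Sc s by blast
    show False
    proof (rule M2[OF s(1,2)])
      fix a assume a: "a \<in> carrier R" "a \<otimes> x = \<zero>"
      have "a \<otimes> s = (a \<otimes> e) \<otimes> s" using eD a by simp
      also have "\<dots> = a \<otimes> (s \<otimes> e)" using a(1) sc ec by algebra
      finally show "a \<otimes> s = \<zero>" using s a by simp
    qed
  qed
  have dm: "\<forall>c\<in>carrier R. \<forall>d\<in>carrier R. c \<otimes> x = \<zero> \<longrightarrow> d \<otimes> x = \<zero> \<longrightarrow> c \<noteq> \<zero> \<longrightarrow> d \<noteq> \<zero> \<longrightarrow> c \<otimes> d \<noteq> \<zero>"
  proof (intro ballI impI notI)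
    fix c d assume c: "c \<in> carrier R" "c \<otimes> x = \<zero>" "c \<noteq> \<zero>" and d: "d \<in> carrier R" "d \<otimes> x = \<zero>" "d \<noteq> \<zero>"
      and cd: "c \<otimes> d = \<zero>"
    define u where "u = c \<oplus> x"
    have uc: "u \<in> carrier R" using c xc by (simp add: u_def)
    have ux: "u \<otimes> x = x" using c xc xx by (simp add: u_def l_distr)
    have u0: "u \<noteq> \<zero>" using ux x0 xc by auto
    have "d \<otimes> u = d \<otimes> c \<oplus> d \<otimes> x" using c d xc by (simp add: u_def r_distr)
    also have "\<dots> = \<zero>" using c d cd by (simp add: m_comm)
    finally have du: "d \<otimes> u = \<zero>" .
    then have ud: "u \<otimes> d = \<zero>" using d uc by (simp add: m_comm)
    have uZ: "u \<in> zd_star R" using zd_starI[OF uc u0 d(1) d(3) ud] .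
    have uS: "u \<in> S"
    proof (rule ccontr)
      assume "u \<notin> S"
      then obtain s where s: "s \<in> S" "s \<otimes> u = \<zero>" using domw uZ by blast
      have sc: "s \<in> carrier R" using Sc s by blast
      have "s \<otimes> x = s \<otimes> (u \<otimes> x)" using ux by simp
      also have "\<dots> = (s \<otimes> u) \<otimes> x" using sc uc xc by (simp add: m_assoc)
      finally have "s \<otimes> x = \<zero>" using s xc by simp
      then show False using iso s by blast
    qed
    have ux': "u \<noteq> x"
    proof
      assume "u = x"
      have "c = (c \<oplus> x) \<ominus> x" using c(1) xc by algebra
      also have "\<dots> = x \<ominus> x" using \<open>u = x\<close> by (simp add: u_def)
      also have "\<dots> = \<zero>" using xc by algebra
      finally show False using c by simp
    qed
    show False
    proof (rule M3[OF uS ux'])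
      fix a assume a: "a \<in> carrier R" "a \<otimes> u = \<zero>"
      have "a \<otimes> x = a \<otimes> (u \<otimes> x)" using ux by simp
      also have "\<dots> = (a \<otimes> u) \<otimes> x" using a(1) uc xc by (simp add: m_assoc)
      finally show "a \<otimes> x = \<zero>" using a xc by simp
    qed
  qed
  show ?thesis
  proof (cases "\<forall>v\<in>carrier R. v \<otimes> (\<one> \<ominus> x) = \<zero> \<longrightarrow> v = \<zero> \<or> v = x")
    case True
    have "domain (zdom R x)" using zdom_domain[OF xc xx _ dm] e0 by (simp add: e_def)
    moreover have "R \<simeq> RDirProd (residue_ring 2) (zdom R x)" using zdom_iso[OF xc xx x0 True] .
    ultimately show ?thesis using noiso by blast
  next
    case False
    then obtain v where v: "v \<in> carrier R" "v \<otimes> e = \<zero>" "v \<noteq> \<zero>" "v \<noteq> x" by (auto simp: e_def)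
    have vx: "v \<otimes> x = v" using fB v by blast
    have xe': "x \<otimes> e = \<zero>" using xe .
    define Zf where "Zf = {t \<in> carrier R. t \<otimes> e = \<zero> \<and> t \<noteq> \<zero> \<and> (\<exists>t'\<in>carrier R. t' \<otimes> e = \<zero> \<and> t' \<noteq> \<zero> \<and> t \<otimes> t' = \<zero>)}"
    have vZf: "v \<in> Zf"
    proof -
      have ev: "v \<otimes> e = \<zero>" using v by simp
      have vZ: "v \<in> zd_star R" using zd_starI[OF v(1) v(3) ec e0 ev] .
      have vS: "v \<notin> S" using D3 v by blast
      obtain s where s: "s \<in> S" "s \<otimes> v = \<zero>" using domw[OF vZ vS] by blast
      have sc: "s \<in> carrier R" using Sc s by blast
      have t1: "s \<otimes> x \<in> carrier R" using sc xc by simp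
      have "s \<otimes> x \<otimes> e = s \<otimes> (x \<otimes> e)" using sc xc ec by (simp add: m_assoc)
      then have t2: "s \<otimes> x \<otimes> e = \<zero>" using xe sc by simp
      have t3: "s \<otimes> x \<noteq> \<zero>" using iso s by blast
      have "v \<otimes> (s \<otimes> x) = s \<otimes> (v \<otimes> x)" using v(1) sc xc by algebra
      also have "\<dots> = \<zero>" using vx s by simp
      finally have t4: "v \<otimes> (s \<otimes> x) = \<zero>" .
      show ?thesis using v t1 t2 t3 t4 unfolding Zf_def by blast
    qed
    have Zfc: "Zf \<subseteq> carrier R" by (auto simp: Zf_def)
    define g where "g = (\<lambda>t. e \<oplus> t)"
    have gS: "g ` Zf \<subseteq> S - {x}"
    proof
      fix u assume "u \<in> g ` Zf"
      then obtain t where t: "t \<in> Zf" "u = e \<oplus> t" by (auto simp: g_def)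
      then obtain t' where tt: "t \<in> carrier R" "t \<otimes> e = \<zero>" "t \<noteq> \<zero>" "t' \<in> carrier R" "t' \<otimes> e = \<zero>" "t' \<noteq> \<zero>" "t \<otimes> t' = \<zero>"
        unfolding Zf_def by blast
      have uc: "u \<in> carrier R" using t tt ec by simp
      have ue: "u \<otimes> e = e" using t tt ec ee by (simp add: l_distr)
      have u0: "u \<noteq> \<zero>" using ue e0 ec by auto
      have "t' \<otimes> u = t' \<otimes> e \<oplus> t' \<otimes> t" using t tt ec by (simp add: r_distr)
      also have "\<dots> = \<zero>" using tt by (simp add: m_comm)
      finally have "t' \<otimes> u = \<zero>" .
      then have ut: "u \<otimes> t' = \<zero>" using uc tt by (simp add: m_comm)
      have uZ: "u \<in> zd_star R" using zd_starI[OF uc u0 tt(4) tt(6) ut] .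
      have uS: "u \<in> S"
      proof (rule ccontr)
        assume "u \<notin> S"
        then obtain s where s: "s \<in> S" "s \<otimes> u = \<zero>" using domw uZ by blast
        have sc: "s \<in> carrier R" using Sc s by blast
        have "s \<otimes> e = s \<otimes> (u \<otimes> e)" using ue by simp
        also have "\<dots> = (s \<otimes> u) \<otimes> e" using sc uc ec by (simp add: m_assoc)
        finally have "s \<otimes> e = \<zero>" using s ec by simp
        then have "s = x" using D3 s by blast
        have "x \<otimes> t = t \<otimes> x" using xc tt by (simp add: m_comm)
        also have "\<dots> = t" using fB tt by blast
        finally have xt: "x \<otimes> t = t" .
        have "x \<otimes> u = x \<otimes> e \<oplus> x \<otimes> t" using t tt ec xc by (simp add: r_distr)
        also have "\<dots> = t" using xe xt tt by simp
        finally have "x \<otimes> u = t" .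
        then show False using s \<open>s = x\<close> tt by simp
      qed
      have "u \<noteq> x"
      proof
        assume "u = x"
        then have "e = \<zero>" using ue xe by simp
        then show False using e0 by simp
      qed
      then show "u \<in> S - {x}" using uS by blast
    qed
    have ginj: "inj_on g Zf"
    proof (rule inj_onI)
      fix a b assume a: "a \<in> Zf" and b: "b \<in> Zf" and ab: "g a = g b"
      have ac: "a \<in> carrier R" and bc: "b \<in> carrier R" using a b Zfc by auto
      have "a = (e \<oplus> a) \<ominus> e" using ac ec by algebra
      also have "\<dots> = (e \<oplus> b) \<ominus> e" using ab by (simp add: g_def)
      also have "\<dots> = b" using bc ec by algebra
      finally show "a = b" .
    qed
    have finS: "finite (S - {x})" using fin by simp
    have finZ: "finite Zf" using inj_on_finite[OF ginj gS finS] .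
    have cZ: "card Zf \<le> card (S - {x})" using card_inj_on_le[OF ginj gS finS] .
    have cS: "card (S - {x}) = card S - 1" using xS fin by simp
    have "S \<noteq> {}" using xS by blast
    then have cS1: "0 < card S" using fin by (simp add: card_gt_0_iff)
    have "card (insert e Zf) \<le> Suc (card Zf)" using finZ by (simp add: card_insert_if)
    then have cT: "card (insert e Zf) \<le> card S" using cZ cS cS1 by linarith
    have tot: "total_dominating_set R (insert e Zf)"
      unfolding tot_iff
    proof (intro conjI ballI)
      have eZ: "e \<in> zd_star R" using zd_starI[OF ec e0 xc x0 ex] .
      have "Zf \<subseteq> zd_star R"
      proof
        fix t assume "t \<in> Zf"
        then obtain t' where tt: "t \<in> carrier R" "t \<noteq> \<zero>" "t' \<in> carrier R" "t' \<noteq> \<zero>" "t \<otimes> t' = \<zero>"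
          unfolding Zf_def by blast
        show "t \<in> zd_star R" using zd_starI[OF tt] .
      qed
      then show "insert e Zf \<subseteq> zd_star R" using eZ by blast
      fix w assume w: "w \<in> zd_star R"
      then obtain c where c: "c \<in> carrier R" "c \<noteq> \<zero>" "w \<otimes> c = \<zero>" and wc: "w \<in> carrier R"
        unfolding zd_star_iff by blast
      show "\<exists>s\<in>insert e Zf. s \<otimes> w = \<zero>"
      proof (cases "w \<otimes> e = \<zero>")
        case True
        then show ?thesis using wc ec by (simp add: m_comm)
      next
        case False
        have ce: "c \<otimes> e = \<zero>"
        proof (rule ccontr)
          assume ce0: "c \<otimes> e \<noteq> \<zero>"
          have "c \<otimes> e \<otimes> x = c \<otimes> (e \<otimes> x)" using c ec xc by (simp add: m_assoc)
          then have cex: "c \<otimes> e \<otimes> x = \<zero>" using ex c by simp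
          have "w \<otimes> e \<otimes> x = w \<otimes> (e \<otimes> x)" using wc ec xc by (simp add: m_assoc)
          then have wex: "w \<otimes> e \<otimes> x = \<zero>" using ex wc by simp
          have "(c \<otimes> e) \<otimes> (w \<otimes> e) = (w \<otimes> c) \<otimes> (e \<otimes> e)" using c(1) wc ec by algebra
          also have "\<dots> = \<zero>" using c ee ec by simp
          finally have "(c \<otimes> e) \<otimes> (w \<otimes> e) = \<zero>" .
          moreover have "c \<otimes> e \<in> carrier R" "w \<otimes> e \<in> carrier R" using c wc ec by auto
          ultimately show False using dm cex wex ce0 False by blast
        qed
        show ?thesis
        proof (cases "w \<otimes> x = \<zero>")
          case True
          have "v \<otimes> w = (v \<otimes> x) \<otimes> w" using vx by simp
          also have "\<dots> = v \<otimes> (w \<otimes> x)" using v(1) xc wc by algebra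
          also have "\<dots> = \<zero>" using True v by simp
          finally show ?thesis using vZf by blast
        next
          case wx: False
          have "w \<otimes> x \<otimes> e = w \<otimes> (x \<otimes> e)" using wc ec xc by (simp add: m_assoc)
          then have t2: "w \<otimes> x \<otimes> e = \<zero>" using xe wc by simp
          have "c \<otimes> (w \<otimes> x) = (w \<otimes> c) \<otimes> x" using c(1) wc xc by algebra
          also have "\<dots> = \<zero>" using c xc by simp
          finally have t4: "c \<otimes> (w \<otimes> x) = \<zero>" .
          have "w \<otimes> x \<in> carrier R" using wc xc by simp
          then have "c \<in> Zf" using c ce t2 t4 wx unfolding Zf_def by blast
          moreover have "c \<otimes> w = \<zero>" using c wc by (simp add: m_comm)
          ultimately show ?thesis by blast
        qed
      qed
    qed
    show ?thesis using tot finZ cT by blast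
  qed
qed

lemma finite_case:
  assumes noiso: "\<not> (\<exists>D::'a ring. domain D \<and> R \<simeq> RDirProd (residue_ring 2) D)"
  shows "finite S \<Longrightarrow> dominating_set R S \<Longrightarrow> \<exists>T. total_dominating_set R T \<and> finite T \<and> card T \<le> card S"
proof (induction "card (isol R S)" arbitrary: S rule: less_induct)
  case less
  show ?case
  proof (cases "isol R S = {}")
    case True then show ?thesis using isol_empty_tot less.prems by blast
  next
    case False
    then obtain x where xi: "x \<in> isol R S" by blast
    show ?thesis
    proof (cases "\<exists>S'. dominating_set R S' \<and> finite S' \<and> card S' \<le> card S \<and> isol R S' \<subset> isol R S")
      case True
      then obtain S' where S': "dominating_set R S'" "finite S'" "card S' \<le> card S" "isol R S' \<subset> isol R S"
        by blast
      have "finite (isol R S)" using less.prems(1) by (rule finite_subset[rotated]) (auto simp: isol_def)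
      then have "card (isol R S') < card (isol R S)" using S'(4) by (rule psubset_card_mono)
      then obtain T where T: "total_dominating_set R T" "finite T" "card T \<le> card S'"
        using less.hyps S'(1,2) by blast
      then show ?thesis using S'(3) by (metis le_trans)
    next
      case False then show ?thesis using step[OF noiso less.prems(2) less.prems(1) xi] by blast
    qed
  qed
qed

lemma infinite_case:
  assumes inf: "infinite S" and dom: "dominating_set R S"
  shows "\<exists>T. total_dominating_set R T \<and> lepoll T S"
proof -
  define g where "g s = (SOME y. y \<in> carrier R \<and> y \<noteq> \<zero> \<and> s \<otimes> y = \<zero>)" for s
  have SZ: "S \<subseteq> zd_star R" using dom by (simp add: dom_iff)
  have gp: "\<And>s. s \<in> S \<Longrightarrow> g s \<in> carrier R \<and> g s \<noteq> \<zero> \<and> s \<otimes> g s = \<zero>"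
  proof -
    fix s assume "s \<in> S"
    then have "s \<in> zd_star R" using SZ by blast
    then have "\<exists>y. y \<in> carrier R \<and> y \<noteq> \<zero> \<and> s \<otimes> y = \<zero>" unfolding zd_star_iff by blast
    then show "g s \<in> carrier R \<and> g s \<noteq> \<zero> \<and> s \<otimes> g s = \<zero>" unfolding g_def by (rule someI_ex)
  qed
  have gs: "\<And>s. s \<in> S \<Longrightarrow> g s \<otimes> s = \<zero>"
  proof -
    fix s assume s: "s \<in> S"
    then have "s \<in> carrier R" using SZ by (auto simp: zd_star_iff)
    then show "g s \<otimes> s = \<zero>" using gp[OF s] by (simp add: m_comm)
  qed
  have "total_dominating_set R (S \<union> g ` S)"
    unfolding tot_iff
  proof (intro conjI ballI)
    have "g ` S \<subseteq> zd_star R"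
    proof
      fix y assume "y \<in> g ` S"
      then obtain s where s: "s \<in> S" "y = g s" by blast
      have "s \<in> zd_star R" using SZ s by blast
      then have "s \<in> carrier R" "s \<noteq> \<zero>" by (auto simp: zd_star_iff)
      then show "y \<in> zd_star R" using zd_starI[of "g s" s] gp[OF s(1)] gs[OF s(1)] s by blast
    qed
    then show "S \<union> g ` S \<subseteq> zd_star R" using SZ by blast
    fix w assume w: "w \<in> zd_star R"
    show "\<exists>x\<in>S \<union> g ` S. x \<otimes> w = \<zero>"
    proof (cases "w \<in> S")
      case True then show ?thesis using gs by blast
    next
      case False then show ?thesis using dom w by (auto simp: dom_iff)
    qed
  qed
  moreover have "lepoll (S \<union> g ` S) S"
  proof -
    have "|S \<union> g ` S| \<le>o |S|"
      by (rule card_of_Un_ordLeq_infinite_Field)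
        (auto simp: Field_card_of inf card_of_Card_order ordLeq_refl card_of_image)
    then show ?thesis unfolding lepoll_def using card_of_ordLeq by blast
  qed
  ultimately show ?thesis by blast
qed

end

lemma exists_min_lepoll:
  assumes "P Y0" shows "\<exists>S. P S \<and> (\<forall>Y. P Y \<longrightarrow> lepoll S Y)"
proof -
  have "|Y0| \<in> card_of ` {Y. P Y}" using assms by blast
  then have "\<exists>z\<in>card_of ` {Y. P Y}. \<forall>y. (y, z) \<in> ordLess \<longrightarrow> y \<notin> card_of ` {Y. P Y}"
    using wf_ordLess[unfolded wf_eq_minimal, rule_format, of "|Y0|" "card_of ` {Y. P Y}"] by blast
  then obtain S where S: "P S" "\<And>Y. P Y \<Longrightarrow> ( |Y|, |S| ) \<notin> ordLess" by blast
  show ?thesis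
  proof (intro exI conjI allI impI)
    show "P S" by (rule S(1))
    fix Y assume "P Y"
    then have "\<not> |Y| <o |S|" using S(2) by blast
    then have "|S| \<le>o |Y|" using ordLess_or_ordLeq[OF card_of_Well_order card_of_Well_order] by blast
    then show "lepoll S Y" unfolding lepoll_def using card_of_ordLeq by blast
  qed
qed

theorem theorem1p1:
  fixes R :: "'a ring"
  assumes "cring R"
    and "\<not> domain R"
    and "\<And>D :: 'a ring. domain D \<Longrightarrow> \<not> (R \<simeq> RDirProd (residue_ring 2) D)"
  shows "\<exists>S T. min_dominating_set R S \<and> min_total_dominating_set R T \<and> T \<approx> S"
proof -
  interpret cring R by (rule assms(1))
  have noiso: "\<not> (\<exists>D::'a ring. domain D \<and> R \<simeq> RDirProd (residue_ring 2) D)" using assms(3) by blast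
  obtain S where S: "dominating_set R S" "\<forall>Y. dominating_set R Y \<longrightarrow> lepoll S Y"
    using exists_min_lepoll[of "dominating_set R", OF tot_dom[OF zd_star_tot]] by blast
  obtain T0 where T0: "total_dominating_set R T0" "\<forall>Y. total_dominating_set R Y \<longrightarrow> lepoll T0 Y"
    using exists_min_lepoll[of "total_dominating_set R", OF zd_star_tot] by blast
  obtain T where T: "total_dominating_set R T" "lepoll T S"
  proof (cases "finite S")
    case True
    then obtain T where "total_dominating_set R T" "finite T" "card T \<le> card S"
      using finite_case[OF noiso True S(1)] by blast
    moreover have "lepoll T S" using lepoll_iff_card_le[of T S] True calculation by blast
    ultimately show ?thesis using that by blast
  next
    case False
    then show ?thesis using that infinite_case[OF False S(1)] by blast
  qed
  have "lepoll T0 S" using T0(2) T lepoll_trans by blast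
  moreover have "lepoll S T0" using S(2) tot_dom[OF T0(1)] by blast
  ultimately have "T0 \<approx> S" by (rule lepoll_antisym)
  moreover have "min_dominating_set R S" using S by (simp add: min_dominating_set_def)
  moreover have "min_total_dominating_set R T0" using T0 by (simp add: min_total_dominating_set_def)
  ultimately show ?thesis by blast
qed

end
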